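(* Let $B,B'\in M_n(R)$ and suppose $B'$ is tropically similar to $B$, i.e. $B'=A^\nabla BA$ for some non-singular $A\in M_n(R)$. Then (a) $\det(B')\models_{gs}\det(B)$, with equality when $B'$ is non-singular; and (b) $\operatorname{tr}(B')\models_{gs}\operatorname{tr}(B)$, where $\operatorname{tr}$ denotes the sum of diagonal entries.
   Context: Supertropical semiring $R=T\cup G\cup\{-\infty\}$: $T=\mathcal G$ an ordered abelian group (tangible), $G=\{a^\nu\}$ a copy (ghost); $a+b$ is the element of larger $\nu$-value if the $\nu$-values differ and $a^\nu$ if equal; multiplication adds $\nu$-values, is ghost if a factor is ghost, $-\infty$ absorbing; $0_R=-\infty$, $1_R=0$. Ghost surpassing: $a\models_{gs}b$ iff $a=b$, or $a\in G$ and the $\nu$-value of $a$ is $\geq$ that of $b$. $\det(A)=\sum_{\sigma\in S_n}\prod_i a_{i,\sigma(i)}$; $A$ non-singular iff $\det(A)\in T$. $\operatorname{adj}(A)_{i,j}=\det(A_{j,i})$ (minor deleting row $j$, column $i$), and for non-singular $A$, $A^\nabla=\det(A)^{-1}\operatorname{adj}(A)$. *)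

theory Defs
  imports "HOL-Combinatorics.Permutations"
begin

text \<open>The supertropical semiring R = T \<union> G \<union> {-\<infinity>} over an ordered abelian group 'g.
  NInf is -\<infinity> (the zero of R), Tng a is the tangible element a, Gh a is the ghost a^\<nu>.\<close>

datatype 'g st = NInf | Tng 'g | Gh 'g

fun nuval :: "'g st \<Rightarrow> 'g" where
  "nuval (Tng a) = a" | "nuval (Gh a) = a" | "nuval NInf = undefined"

fun tangible :: "'g st \<Rightarrow> bool" where
  "tangible (Tng a) = True" | "tangible _ = False"

fun ghost :: "'g st \<Rightarrow> bool" where
  "ghost (Gh a) = True" | "ghost _ = False"

fun nu_le :: "'g::linorder st \<Rightarrow> 'g st \<Rightarrow> bool" where
  "nu_le NInf y = True"
| "nu_le x NInf = False"
| "nu_le x y = (nuval x \<le> nuval y)"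

instantiation st :: (linordered_ab_group_add) comm_semiring_1
begin

definition zero_st :: "'a st" where "zero_st = NInf"
definition one_st :: "'a st" where "one_st = Tng 0"

fun plus_st :: "'a st \<Rightarrow> 'a st \<Rightarrow> 'a st" where
  "plus_st NInf y = y"
| "plus_st x NInf = x"
| "plus_st x y = (if nuval x < nuval y then y else if nuval y < nuval x then x
                   else Gh (nuval x))"

fun times_st :: "'a st \<Rightarrow> 'a st \<Rightarrow> 'a st" where
  "times_st NInf y = NInf"
| "times_st x NInf = NInf"
| "times_st (Tng a) (Tng b) = Tng (a + b)"
| "times_st x y = Gh (nuval x + nuval y)"

instance
proof
  fix a b c :: "'a st"
  show "a + b + c = a + (b + c)"
    apply (cases a; cases b; cases c)
    apply (simp_all split: if_split)
    apply (auto simp: not_less)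
    done
  show "a + b = b + a"
    by (cases a; cases b) auto
  show "0 + a = a" by (simp add: zero_st_def)
  show "a * b * c = a * (b * c)"
    by (cases a; cases b; cases c) (auto simp: add.assoc)
  show "a * b = b * a"
    by (cases a; cases b) (auto simp: add.commute)
  show "1 * a = a" by (cases a) (auto simp: one_st_def)
  show "0 * a = 0" by (simp add: zero_st_def)
  show "a * 0 = 0" by (cases a) (auto simp: zero_st_def)
  show "(a + b) * c = a * c + b * c"
    by (cases a; cases b; cases c) (simp_all split: if_split)
  show "(0::'a st) \<noteq> 1" by (simp add: zero_st_def one_st_def)
qed
end

definition gs :: "'g::linorder st \<Rightarrow> 'g st \<Rightarrow> bool" where
  "gs a b \<longleftrightarrow> a = b \<or> (ghost a \<and> nu_le b a)"

fun tinv :: "'g::ab_group_add st \<Rightarrow> 'g st" where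
  "tinv (Tng a) = Tng (- a)" | "tinv x = undefined"

text \<open>n \<times> n matrices over R, represented as functions on indices 0..n-1.\<close>
type_synonym 'g smat = "nat \<Rightarrow> nat \<Rightarrow> 'g st"

definition tdet :: "nat \<Rightarrow> ('g::linordered_ab_group_add) smat \<Rightarrow> 'g st" where
  "tdet n A = (\<Sum>\<sigma>\<in>{p. p permutes {..<n}}. \<Prod>i<n. A i (\<sigma> i))"

definition ttrace :: "nat \<Rightarrow> ('g::linordered_ab_group_add) smat \<Rightarrow> 'g st" where
  "ttrace n A = (\<Sum>i<n. A i i)"

definition mmul :: "nat \<Rightarrow> ('g::linordered_ab_group_add) smat \<Rightarrow> 'g smat \<Rightarrow> 'g smat" where
  "mmul n A B = (\<lambda>i j. \<Sum>k<n. A i k * B k j)"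

definition minor :: "('g) smat \<Rightarrow> nat \<Rightarrow> nat \<Rightarrow> 'g smat" where
  "minor A r c = (\<lambda>k l. A (if k < r then k else Suc k) (if l < c then l else Suc l))"

definition adj :: "nat \<Rightarrow> ('g::linordered_ab_group_add) smat \<Rightarrow> 'g smat" where
  "adj n A = (\<lambda>i j. tdet (n - 1) (minor A j i))"

text \<open>A^\<nabla> = det(A)^{-1} adj(A) (for non-singular A).\<close>
definition qinv :: "nat \<Rightarrow> ('g::linordered_ab_group_add) smat \<Rightarrow> 'g smat" where
  "qinv n A = (\<lambda>i j. tinv (tdet n A) * adj n A i j)"

end

theory Submission
  imports Defs "HOL-Combinatorics.Cycles"
begin

lemma cycle_last:
  "distinct (y#zs) \<Longrightarrow> cycle_of_list (y#zs) (last (y#zs)) = y"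
proof (induction zs arbitrary: y)
  case Nil then show ?case by simp
next
  case (Cons z zs)
  have "cycle_of_list (z#zs) (last (z#zs)) = z" using Cons by simp
  then show ?case by (simp add: transpose_def)
qed

locale potsetup =
  fixes w :: "nat \<Rightarrow> nat \<Rightarrow> 'g::linordered_ab_group_add" and \<pi> :: "nat \<Rightarrow> nat" and n :: nat
  assumes pi: "\<pi> permutes {..<n}"
    and opt: "\<And>\<sigma>. \<sigma> permutes {..<n} \<Longrightarrow> (\<Sum>i<n. w i (\<sigma> i)) \<le> (\<Sum>i<n. w i (\<pi> i))"
begin

definition r :: "nat \<Rightarrow> nat \<Rightarrow> 'g" where "r i k = w i (\<pi> k) - w k (\<pi> k)"

fun pw :: "nat list \<Rightarrow> 'g" where
  "pw (x#y#zs) = r x y + pw (y#zs)"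
| "pw _ = 0"

lemma cycle_sum_le:
  assumes "distinct xs" "set xs \<subseteq> {..<n}"
  shows "(\<Sum>i\<in>set xs. r i (cycle_of_list xs i)) \<le> 0"
proof -
  let ?c = "cycle_of_list xs"
  have cp: "?c permutes set xs" by (rule cycle_permutes)
  have cpn: "?c permutes {..<n}" using permutes_subset[OF cp assms(2)] .
  have "(\<pi> \<circ> ?c) permutes {..<n}" using permutes_compose[OF cpn pi] .
  from opt[OF this] have o1: "(\<Sum>i<n. w i (\<pi> (?c i))) \<le> (\<Sum>i<n. w i (\<pi> i))" by simp
  have fin: "finite (set xs)" by simp
  have spl: "\<And>f. (\<Sum>i<n. f i) = (\<Sum>i\<in>set xs. f i) + (\<Sum>i\<in>{..<n} - set xs. f i)"
    using assms(2) by (metis add.commute finite_lessThan sum.subset_diff)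
  have rest: "(\<Sum>i\<in>{..<n} - set xs. w i (\<pi> (?c i))) = (\<Sum>i\<in>{..<n} - set xs. w i (\<pi> i))"
    by (rule sum.cong) (auto simp: permutes_not_in[OF cp])
  have o2: "(\<Sum>i\<in>set xs. w i (\<pi> (?c i))) \<le> (\<Sum>i\<in>set xs. w i (\<pi> i))"
    using o1 unfolding spl[of "\<lambda>i. w i (\<pi> (?c i))"] spl[of "\<lambda>i. w i (\<pi> i)"] rest by simp
  have re: "(\<Sum>i\<in>set xs. w (?c i) (\<pi> (?c i))) = (\<Sum>i\<in>set xs. w i (\<pi> i))"
    using sum.reindex_bij_betw[OF permutes_imp_bij[OF cp], of "\<lambda>i. w i (\<pi> i)"] by simp
  have "(\<Sum>i\<in>set xs. r i (?c i)) = (\<Sum>i\<in>set xs. w i (\<pi> (?c i))) - (\<Sum>i\<in>set xs. w (?c i) (\<pi> (?c i)))"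
    unfolding r_def by (simp add: sum_subtractf)
  with o2 re show ?thesis by simp
qed

lemma pw_cycle:
  "distinct (x#xs) \<Longrightarrow> pw (x#xs) + r (last (x#xs)) x = (\<Sum>i\<in>set (x#xs). r i (cycle_of_list (x#xs) i))"
proof (induction xs arbitrary: x)
  case Nil then show ?case by (simp add: r_def)
next
  case (Cons y zs)
  let ?c' = "cycle_of_list (y#zs)"
  let ?L = "last (y#zs)"
  have d: "distinct (y#zs)" "x \<notin> set (y#zs)" using Cons.prems by auto
  have IH: "pw (y#zs) + r ?L y = (\<Sum>i\<in>set (y#zs). r i (?c' i))" using Cons.IH[OF d(1)] .
  have cp: "?c' permutes set (y#zs)" by (rule cycle_permutes)
  have cL: "?c' ?L = y" using cycle_last[OF d(1)] .
  have Lin: "?L \<in> set (y#zs)" by simp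
  have cin: "\<And>i. i \<in> set (y#zs) \<Longrightarrow> ?c' i \<in> set (y#zs)" using permutes_in_image[OF cp] by blast
  have cx: "?c' x = x" using permutes_not_in[OF cp d(2)] .
  have ne: "\<And>i. i \<in> set (y#zs) \<Longrightarrow> i \<noteq> ?L \<Longrightarrow> ?c' i \<noteq> y"
    using cL permutes_inj[OF cp] by (metis injD)
  define c where "c = cycle_of_list (x#y#zs)"
  have c_eq: "c = transpose x y \<circ> ?c'" unfolding c_def by simp
  have cx2: "c x = y" using cx unfolding c_eq by (simp add: transpose_def)
  have cL2: "c ?L = x" using cL unfolding c_eq by (simp add: transpose_def)
  have co: "\<And>i. i \<in> set (y#zs) \<Longrightarrow> i \<noteq> ?L \<Longrightarrow> c i = ?c' i"
  proof -
    fix i assume a: "i \<in> set (y#zs)" "i \<noteq> ?L"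
    have "?c' i \<noteq> x" using cin[OF a(1)] d(2) by metis
    moreover have "?c' i \<noteq> y" using ne[OF a] .
    ultimately show "c i = ?c' i" unfolding c_eq by (simp add: transpose_def)
  qed
  have fin: "finite (set (y#zs))" by simp
  have s1: "(\<Sum>i\<in>set (x#y#zs). r i (c i)) = r x y + (\<Sum>i\<in>set (y#zs). r i (c i))"
    using d(2) cx2 by simp
  have s2: "(\<Sum>i\<in>set (y#zs). r i (c i)) = r ?L x + (\<Sum>i\<in>set (y#zs) - {?L}. r i (c i))"
    by (simp only: sum.remove[OF fin Lin, of "\<lambda>i. r i (c i)"] cL2)
  have s3: "(\<Sum>i\<in>set (y#zs). r i (?c' i)) = r ?L y + (\<Sum>i\<in>set (y#zs) - {?L}. r i (?c' i))"
    by (simp only: sum.remove[OF fin Lin, of "\<lambda>i. r i (?c' i)"] cL)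
  have s4: "(\<Sum>i\<in>set (y#zs) - {?L}. r i (c i)) = (\<Sum>i\<in>set (y#zs) - {?L}. r i (?c' i))"
    by (rule sum.cong) (auto simp: co)
  have "pw (x#y#zs) + r (last (x#y#zs)) x = r x y + pw (y#zs) + r ?L x" by simp
  also have "\<dots> = (\<Sum>i\<in>set (x#y#zs). r i (c i))"
    using s1 s2 s3 s4 IH by (simp add: algebra_simps)
  finally show ?case unfolding c_def .
qed

lemma cycle_le:
  assumes "distinct (x#xs)" "set (x#xs) \<subseteq> {..<n}"
  shows "pw (x#xs) + r (last (x#xs)) x \<le> 0"
  using pw_cycle[OF assms(1)] cycle_sum_le[OF assms] by simp

lemma pw_split: "pw (xs @ y # zs) = pw (xs @ [y]) + pw (y # zs)"
proof (induction xs)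
  case Nil then show ?case by simp
next
  case (Cons a xs)
  then show ?case by (cases xs) auto
qed

lemma pw_snoc: "xs \<noteq> [] \<Longrightarrow> pw (xs @ [k]) = pw xs + r (last xs) k"
proof (induction xs)
  case Nil then show ?case by simp
next
  case (Cons a xs)
  then show ?case by (cases xs) auto
qed

definition Pk :: "nat \<Rightarrow> nat list set" where
  "Pk k = {xs. distinct xs \<and> set xs \<subseteq> {..<n} \<and> xs \<noteq> [] \<and> last xs = k}"

definition p :: "nat \<Rightarrow> 'g" where "p k = Max (pw ` Pk k)"

lemma Pk_fin: "finite (Pk k)"
  by (rule finite_subset[OF _ finite_subset_distinct[of "{..<n}"]]) (auto simp: Pk_def)

lemma Pk_ne: "k < n \<Longrightarrow> [k] \<in> Pk k" by (simp add: Pk_def)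

lemma p_ge: "xs \<in> Pk k \<Longrightarrow> pw xs \<le> p k"
  unfolding p_def using Pk_fin by (intro Max_ge) auto

lemma p_in: "k < n \<Longrightarrow> \<exists>xs\<in>Pk k. pw xs = p k"
  unfolding p_def using Pk_fin Pk_ne[of k] Max_in[of "pw ` Pk k"] by fastforce

lemma p_edge:
  assumes "i < n" "k < n" shows "p i + r i k \<le> p k"
proof -
  obtain xs where xs: "xs \<in> Pk i" "pw xs = p i" using p_in[OF assms(1)] by blast
  have xs1: "distinct xs" "set xs \<subseteq> {..<n}" "xs \<noteq> []" "last xs = i" using xs(1) unfolding Pk_def by auto
  show ?thesis
  proof (cases "k \<in> set xs")
    case False
    have "xs @ [k] \<in> Pk k" unfolding Pk_def using xs1 False assms(2) by simp
    then have "pw (xs @ [k]) \<le> p k" by (rule p_ge)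
    moreover have "pw (xs @ [k]) = p i + r i k" using pw_snoc[OF xs1(3), of k] xs(2) xs1(4) by simp
    ultimately show ?thesis by simp
  next
    case True
    then obtain ys zs where sp: "xs = ys @ k # zs" by (meson split_list)
    have d: "distinct (ys @ k # zs)" "set (ys @ k # zs) \<subseteq> {..<n}" using xs1 sp by auto
    have "ys @ [k] \<in> Pk k" unfolding Pk_def using d by auto
    then have a: "pw (ys @ [k]) \<le> p k" by (rule p_ge)
    have dz: "distinct (k#zs)" "set (k#zs) \<subseteq> {..<n}" using d by auto
    have lz: "last (k#zs) = i" using xs1(4) sp by (simp add: last_append)
    have b: "pw (k#zs) + r i k \<le> 0" using cycle_le[OF dz] lz by simp
    have pis: "p i = pw (ys @ [k]) + pw (k#zs)" using xs(2) sp pw_split[of ys k zs] by simp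
    have "p i + r i k = pw (ys @ [k]) + (pw (k#zs) + r i k)" using pis by (simp add: add.assoc)
    also have "\<dots> \<le> pw (ys @ [k]) + 0" using b by (rule add_left_mono)
    finally show ?thesis using a by simp
  qed
qed

lemma potentials:
  "\<exists>u v. (\<forall>i<n. \<forall>j<n. w i j \<le> u i + v j) \<and> (\<forall>i<n. w i (\<pi> i) = u i + v (\<pi> i))"
proof (intro exI conjI allI impI)
  let ?u = "\<lambda>i. - p i" and ?v = "\<lambda>j. p (inv \<pi> j) + w (inv \<pi> j) j"
  fix i j assume ij: "i < n" "j < n"
  define k where "k = inv \<pi> j"
  have k: "k < n" "\<pi> k = j" unfolding k_def
    using ij permutes_inverses(1)[OF pi] permutes_in_image[OF permutes_inv[OF pi], of j] by auto
  have "w i j = r i k + w k (\<pi> k)" using k by (simp add: r_def)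
  also have "\<dots> \<le> p k - p i + w k (\<pi> k)" using p_edge[OF ij(1) k(1)] by (simp add: algebra_simps)
  finally show "w i j \<le> ?u i + ?v j" using k unfolding k_def by (simp add: algebra_simps)
next
  fix i assume "i < n"
  show "w i (\<pi> i) = - p i + (p (inv \<pi> (\<pi> i)) + w (inv \<pi> (\<pi> i)) (\<pi> i))"
    by (simp add: permutes_inverses[OF pi])
qed

end

type_synonym 'g stt = "'g st"

lemma st_zero: "(0::'g::linordered_ab_group_add st) = NInf" by (simp add: zero_st_def)
lemma st_one: "(1::'g::linordered_ab_group_add st) = Tng 0" by (simp add: one_st_def)

definition gz :: "'g::linordered_ab_group_add st \<Rightarrow> bool" where
  "gz x \<longleftrightarrow> x = NInf \<or> ghost x"

lemma gz_add: "gz x \<Longrightarrow> gz y \<Longrightarrow> gz (x + y)"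
  by (cases x; cases y) (auto simp: gz_def)

lemma gz_mult: "gz x \<Longrightarrow> gz (x * y)"
  by (cases x; cases y) (auto simp: gz_def)

lemma gz_double: "gz (x + x)"
  by (cases x) (auto simp: gz_def)

lemma gz_zero: "gz 0" by (simp add: gz_def st_zero)

lemma gz_sum: "(\<And>i. i \<in> S \<Longrightarrow> gz (f i)) \<Longrightarrow> gz (sum f S)"
proof (induction S rule: infinite_finite_induct)
  case (infinite A) then show ?case by (simp add: gz_zero)
next
  case empty then show ?case by (simp add: gz_zero)
next
  case (insert x F) then show ?case by (simp add: gz_add)
qed

lemma gs_refl: "gs a a" by (simp add: gs_def)

lemma gs_add: "gs a b \<Longrightarrow> gs c d \<Longrightarrow> gs (a + c) (b + d)"
  for a b c d :: "'g::linordered_ab_group_add st"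
  by (cases a; cases b; cases c; cases d) (auto simp: gs_def not_less)

lemma gs_mult: "gs a b \<Longrightarrow> gs c d \<Longrightarrow> gs (a * c) (b * d)"
  for a b c d :: "'g::linordered_ab_group_add st"
  by (cases a; cases b; cases c; cases d) (auto simp: gs_def not_less add_mono)

lemma gs_trans: "gs a b \<Longrightarrow> gs b c \<Longrightarrow> gs a c"
  for a b c :: "'g::linordered_ab_group_add st"
  by (cases a; cases b; cases c) (auto simp: gs_def)

lemma gz_gs0: "gz g \<Longrightarrow> gs g 0"
  by (cases g) (auto simp: gs_def gz_def st_zero)

lemma gs_add_gz: "gz g \<Longrightarrow> gs (a + g) a"
  using gs_add[OF gs_refl gz_gs0, of g a] by simp

lemma gs_tangible: "gs a b \<Longrightarrow> tangible a \<Longrightarrow> a = b"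
  by (cases a) (auto simp: gs_def)

lemma gz_invol:
  assumes "finite S" "\<And>s. s \<in> S \<Longrightarrow> f s \<in> S \<and> f s \<noteq> s \<and> f (f s) = s \<and> F (f s) = F s"
  shows "gz (sum F S)"
  using assms
proof (induction "card S" arbitrary: S rule: less_induct)
  case less
  show ?case
  proof (cases "S = {}")
    case True then show ?thesis by (simp add: gz_zero)
  next
    case False
    then obtain s where s: "s \<in> S" by blast
    have fs: "f s \<in> S" "f s \<noteq> s" "F (f s) = F s" using less.prems(2)[OF s] by auto
    let ?S' = "S - {s, f s}"
    have cl: "\<And>t. t \<in> ?S' \<Longrightarrow> f t \<in> ?S'"
    proof -
      fix t assume t: "t \<in> ?S'"
      have h: "f t \<in> S" "f (f t) = t" using less.prems(2)[of t] t by auto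
      have "f t \<noteq> s" using h(2) t less.prems(2)[OF s] by auto
      moreover have "f t \<noteq> f s"
      proof
        assume "f t = f s" then have "f (f t) = f (f s)" by simp
        then show False using h(2) t less.prems(2)[OF s] by auto
      qed
      ultimately show "f t \<in> ?S'" using h by auto
    qed
    have "card ?S' < card S" using s fs less.prems(1) by (intro psubset_card_mono) auto
    moreover have "finite ?S'" using less.prems(1) by simp
    ultimately have g: "gz (sum F ?S')"
      using less.hyps cl less.prems(2) by (metis DiffD1)
    have "sum F S = F s + F (f s) + sum F ?S'"
    proof -
      have "sum F S = F s + sum F (S - {s})" using sum.remove[OF less.prems(1) s] .
      also have "sum F (S - {s}) = F (f s) + sum F (S - {s} - {f s})"
        using sum.remove[of "S - {s}" "f s" F] less.prems(1) fs by auto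
      finally show ?thesis by (simp add: add.assoc Diff_insert2[symmetric] insert_commute)
    qed
    then show ?thesis using fs(3) g gz_double gz_add by metis
  qed
qed

definition nub :: "'g::linordered_ab_group_add st \<Rightarrow> 'g \<Rightarrow> bool" where
  "nub x t \<longleftrightarrow> x = NInf \<or> nuval x \<le> t"
definition nlb :: "'g::linordered_ab_group_add st \<Rightarrow> 'g \<Rightarrow> bool" where
  "nlb x t \<longleftrightarrow> x \<noteq> NInf \<and> t \<le> nuval x"

lemma nub_mult: "nub x s \<Longrightarrow> nub y t \<Longrightarrow> nub (x * y) (s + t)"
  by (cases x; cases y) (auto simp: nub_def add_mono)
lemma nlb_mult: "nlb x s \<Longrightarrow> nlb y t \<Longrightarrow> nlb (x * y) (s + t)"
  by (cases x; cases y) (auto simp: nlb_def add_mono)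
lemma nub_add: "nub x t \<Longrightarrow> nub y t \<Longrightarrow> nub (x + y) t"
  by (cases x; cases y) (auto simp: nub_def)
lemma nlb_add: "nlb x t \<Longrightarrow> nlb (x + y) t"
  by (cases x; cases y) (auto simp: nlb_def)
lemma nlb_add2: "nlb y t \<Longrightarrow> nlb (x + y) t"
  using nlb_add[of y t x] by (simp add: add.commute)
lemma nub_mono: "nub x s \<Longrightarrow> s \<le> t \<Longrightarrow> nub x t"
  by (auto simp: nub_def)
lemma nlb_mono: "nlb x s \<Longrightarrow> t \<le> s \<Longrightarrow> nlb x t"
  by (auto simp: nlb_def)

lemma nub_prod: "(\<And>i. i \<in> I \<Longrightarrow> nub (f i) (g i)) \<Longrightarrow> nub (prod f I) (sum g I)"
proof (induction I rule: infinite_finite_induct)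
  case (infinite A) then show ?case by (simp add: nub_def st_one)
next
  case empty then show ?case by (simp add: nub_def st_one)
next
  case (insert x F) then show ?case by (simp add: nub_mult)
qed

lemma nlb_prod: "(\<And>i. i \<in> I \<Longrightarrow> nlb (f i) (g i)) \<Longrightarrow> nlb (prod f I) (sum g I)"
proof (induction I rule: infinite_finite_induct)
  case (infinite A) then show ?case by (simp add: nlb_def st_one)
next
  case empty then show ?case by (simp add: nlb_def st_one)
next
  case (insert x F) then show ?case by (simp add: nlb_mult)
qed

lemma nub_sum: "(\<And>i. i \<in> I \<Longrightarrow> nub (f i) t) \<Longrightarrow> nub (sum f I) t"
proof (induction I rule: infinite_finite_induct)
  case (infinite A) then show ?case by (simp add: nub_def st_zero)
next
  case empty then show ?case by (simp add: nub_def st_zero)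
next
  case (insert x F) then show ?case by (simp add: nub_add)
qed

lemma nlb_sum: "finite I \<Longrightarrow> i \<in> I \<Longrightarrow> nlb (f i) t \<Longrightarrow> nlb (sum f I) t"
  by (simp add: sum.remove nlb_add)

lemma add_summand_nub: "x + y \<noteq> NInf \<Longrightarrow> nub x (nuval (x + y))"
  for x y :: "'g::linordered_ab_group_add st"
  by (cases x; cases y) (auto simp: nub_def)

lemma sum_summand_nub: "finite I \<Longrightarrow> i \<in> I \<Longrightarrow> sum f I \<noteq> NInf \<Longrightarrow> nub (f i) (nuval (sum f I))"
  using add_summand_nub[of "f i" "sum f (I - {i})"] by (simp add: sum.remove)

lemma sum_max_summand: "finite I \<Longrightarrow> sum f I \<noteq> NInf \<Longrightarrow> \<exists>i\<in>I. f i \<noteq> NInf \<and> nuval (f i) = nuval (sum f I)"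
  for f :: "'a \<Rightarrow> 'g::linordered_ab_group_add st"
proof (induction I rule: finite_induct)
  case empty then show ?case by (simp add: st_zero)
next
  case (insert x F)
  show ?case
  proof (cases "sum f F = NInf")
    case True then show ?thesis using insert by (cases "f x") auto
  next
    case False
    obtain j where j: "j \<in> F" "f j \<noteq> NInf" "nuval (f j) = nuval (sum f F)" using insert.IH[OF False] by blast
    show ?thesis
    proof (cases "f x = NInf")
      case True then show ?thesis using j insert by auto
    next
      case False2: False
      have e: "sum f (insert x F) = f x + sum f F" using insert by simp
      show ?thesis
      proof (cases "nuval (f x) \<le> nuval (sum f F)")
        case True
        then have "nuval (f x + sum f F) = nuval (sum f F)"
          using False False2 by (cases "f x"; cases "sum f F") auto
        then show ?thesis using j e by auto
      next
        case False3: False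
        then have "nuval (f x + sum f F) = nuval (f x)"
          using False False2 by (cases "f x"; cases "sum f F") auto
        then show ?thesis using False2 e by auto
      qed
    qed
  qed
qed

abbreviation "Perms n \<equiv> {p. p permutes {..<n::nat}}"

lemma perm_lt: "\<sigma> permutes {..<n} \<Longrightarrow> i < n \<Longrightarrow> \<sigma> i < n"
  using permutes_in_image[of \<sigma> "{..<n}" i] by simp

lemma tdet_cong:
  assumes "\<And>i j. i < n \<Longrightarrow> j < n \<Longrightarrow> M i j = N i j"
  shows "tdet n M = tdet n N"
  unfolding tdet_def
  by (rule sum.cong[OF refl], rule prod.cong[OF refl]) (auto simp: assms perm_lt)

lemma tdet_rep_rows:
  fixes M :: "('g::linordered_ab_group_add) smat"
  assumes kl: "k < n" "l < n" "k \<noteq> l" and eq: "\<And>j. j < n \<Longrightarrow> M k j = M l j"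
  shows "gz (tdet n M)"
  unfolding tdet_def
proof (rule gz_invol[where f = "\<lambda>\<sigma>. \<sigma> \<circ> transpose k l"])
  show "finite (Perms n)" by (simp add: finite_permutations)
next
  fix \<sigma> assume s: "\<sigma> \<in> Perms n"
  then have sp: "\<sigma> permutes {..<n}" by simp
  let ?t = "transpose k l"
  have tp: "?t permutes {..<n}" using kl by (simp add: permutes_swap_id)
  have a: "\<sigma> \<circ> ?t \<in> Perms n" using permutes_compose[OF tp sp] by simp
  have b: "\<sigma> \<circ> ?t \<noteq> \<sigma>"
  proof
    assume "\<sigma> \<circ> ?t = \<sigma>"
    then have "\<sigma> l = \<sigma> k" by (metis comp_apply transpose_apply_first)
    then show False using permutes_inj[OF sp] kl(3) by (metis injD)
  qed
  have c: "\<sigma> \<circ> ?t \<circ> ?t = \<sigma>" by (simp add: comp_assoc)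
  have Mt: "\<And>i j. i < n \<Longrightarrow> j < n \<Longrightarrow> M (?t i) j = M i j"
    using eq by (auto simp: transpose_def)
  have "(\<Prod>i<n. M i ((\<sigma> \<circ> ?t) i)) = (\<Prod>i<n. (\<lambda>i. M (?t i) (\<sigma> i)) (?t i))"
    by (simp add: transpose_transpose)
  also have "\<dots> = (\<Prod>i<n. M (?t i) (\<sigma> i))"
    using prod.reindex_bij_betw[OF permutes_imp_bij[OF tp], of "\<lambda>i. M (?t i) (\<sigma> i)"] .
  also have "\<dots> = (\<Prod>i<n. M i (\<sigma> i))"
    by (rule prod.cong) (auto simp: Mt perm_lt[OF sp])
  finally show "\<sigma> \<circ> ?t \<in> Perms n \<and> \<sigma> \<circ> ?t \<noteq> \<sigma> \<and> \<sigma> \<circ> ?t \<circ> ?t = \<sigma> \<and>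
      (\<Prod>i<n. M i ((\<sigma> \<circ> ?t) i)) = (\<Prod>i<n. M i (\<sigma> i))"
    using a b c by simp
qed

lemma tdet_scalar:
  "tdet n (\<lambda>i j. c * M i j) = c ^ n * tdet n M"
  unfolding tdet_def by (simp add: prod.distrib sum_distrib_left)

lemma tdet_row_perm:
  assumes rho: "\<rho> permutes {..<n}"
  shows "tdet n (\<lambda>i j. Y (\<rho> i) j) = tdet n Y"
proof -
  have "\<And>\<sigma>. (\<Prod>i<n. Y (\<rho> i) (\<sigma> i)) = (\<Prod>i<n. Y i ((\<sigma> \<circ> inv \<rho>) i))"
  proof -
    fix \<sigma>
    have "(\<Prod>i<n. Y (\<rho> i) (\<sigma> i)) = (\<Prod>i<n. (\<lambda>j. Y j (\<sigma> (inv \<rho> j))) (\<rho> i))"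
      by (simp add: permutes_inverses[OF rho])
    also have "\<dots> = (\<Prod>j<n. Y j (\<sigma> (inv \<rho> j)))"
      using prod.reindex_bij_betw[OF permutes_imp_bij[OF rho], of "\<lambda>j. Y j (\<sigma> (inv \<rho> j))"] .
    finally show "?thesis \<sigma>" by simp
  qed
  then have "tdet n (\<lambda>i j. Y (\<rho> i) j) = (\<Sum>\<sigma>\<in>Perms n. (\<Prod>i<n. Y i ((\<sigma> \<circ> inv \<rho>) i)))"
    unfolding tdet_def by simp
  also have "\<dots> = tdet n Y"
    unfolding tdet_def using sum_permutations_compose_right[OF permutes_inv[OF rho], of "\<lambda>\<sigma>. \<Prod>i<n. Y i (\<sigma> i)"]
    by simp
  finally show ?thesis .
qed

definition ext :: "nat \<Rightarrow> (nat \<Rightarrow> nat) \<Rightarrow> nat \<Rightarrow> nat" where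
  "ext n g = (\<lambda>i. if i < n then g i else i)"

lemma ext_perm:
  assumes "g \<in> PiE {..<n} (\<lambda>_. {..<n})" "inj_on g {..<n}"
  shows "ext n g permutes {..<n}"
proof (rule inj_imp_permutes)
  show "inj_on (ext n g) {..<n}" using assms(2) unfolding ext_def inj_on_def by auto
  show "\<And>x. x \<in> {..<n} \<Longrightarrow> ext n g x \<in> {..<n}" using assms(1) unfolding ext_def by auto
  show "\<And>i. i \<notin> {..<n} \<Longrightarrow> ext n g i = i" unfolding ext_def by auto
qed simp

lemma tdet_mult:
  fixes X Y :: "('g::linordered_ab_group_add) smat"
  shows "gs (tdet n (mmul n X Y)) (tdet n X * tdet n Y)"
proof -
  let ?PE = "PiE {..<n} (\<lambda>_. {..<n::nat})"
  let ?I = "{g\<in>?PE. inj_on g {..<n}}"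
  let ?N = "{g\<in>?PE. \<not> inj_on g {..<n}}"
  let ?T = "\<lambda>g. (\<Prod>i<n. X i (g i)) * tdet n (\<lambda>i j. Y (g i) j)"
  have finPE: "finite ?PE" by (simp add: finite_PiE)
  have "tdet n (mmul n X Y) = (\<Sum>\<sigma>\<in>Perms n. \<Sum>g\<in>?PE. \<Prod>i<n. X i (g i) * Y (g i) (\<sigma> i))"
    unfolding tdet_def mmul_def by (simp add: prod_sum_PiE)
  also have "\<dots> = (\<Sum>g\<in>?PE. \<Sum>\<sigma>\<in>Perms n. \<Prod>i<n. X i (g i) * Y (g i) (\<sigma> i))"
    by (rule sum.swap)
  also have "\<dots> = (\<Sum>g\<in>?PE. ?T g)"
    unfolding tdet_def by (simp add: prod.distrib sum_distrib_left)
  also have "\<dots> = (\<Sum>g\<in>?I. ?T g) + (\<Sum>g\<in>?N. ?T g)"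
    using finPE by (subst sum.union_disjoint[symmetric]) (auto intro: sum.cong)
  finally have e1: "tdet n (mmul n X Y) = (\<Sum>g\<in>?I. ?T g) + (\<Sum>g\<in>?N. ?T g)" .
  have gN: "gz (\<Sum>g\<in>?N. ?T g)"
  proof (rule gz_sum)
    fix g assume g: "g \<in> ?N"
    then obtain k l where kl: "k < n" "l < n" "k \<noteq> l" "g k = g l" unfolding inj_on_def by auto
    have "gz (tdet n (\<lambda>i j. Y (g i) j))" by (rule tdet_rep_rows[OF kl(1-3)]) (simp add: kl(4))
    then show "gz (?T g)" by (metis gz_mult mult.commute)
  qed
  have eI: "(\<Sum>g\<in>?I. ?T g) = (\<Sum>g\<in>?I. (\<Prod>i<n. X i (g i))) * tdet n Y"
  proof -
    have "\<And>g. g \<in> ?I \<Longrightarrow> tdet n (\<lambda>i j. Y (g i) j) = tdet n Y"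
    proof -
      fix g assume g: "g \<in> ?I"
      have "tdet n (\<lambda>i j. Y (g i) j) = tdet n (\<lambda>i j. Y (ext n g i) j)"
        by (rule tdet_cong) (simp add: ext_def)
      also have "\<dots> = tdet n Y" using tdet_row_perm[OF ext_perm] g by auto
      finally show "tdet n (\<lambda>i j. Y (g i) j) = tdet n Y" .
    qed
    then show ?thesis by (simp add: sum_distrib_right)
  qed
  have eX: "(\<Sum>g\<in>?I. (\<Prod>i<n. X i (g i))) = tdet n X"
    unfolding tdet_def
  proof (rule sum.reindex_bij_witness[where j = "ext n" and i = "\<lambda>\<sigma>. restrict \<sigma> {..<n}"])
    fix g assume g: "g \<in> ?I"
    show "restrict (ext n g) {..<n} = g" using g by (auto simp: ext_def restrict_def PiE_def extensional_def)
    show "ext n g \<in> Perms n" using ext_perm g by auto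
    show "(\<Prod>i<n. X i (ext n g i)) = (\<Prod>i<n. X i (g i))" by (simp add: ext_def)
  next
    fix \<sigma> assume s: "\<sigma> \<in> Perms n"
    then have sp: "\<sigma> permutes {..<n}" by simp
    show "ext n (restrict \<sigma> {..<n}) = \<sigma>" using permutes_not_in[OF sp] by (auto simp: ext_def)
    show "restrict \<sigma> {..<n} \<in> ?I"
      using perm_lt[OF sp] permutes_inj[OF sp] by (auto simp: PiE_def inj_on_def inj_def)
  qed
  show ?thesis unfolding e1 eI eX by (rule gs_add_gz[OF gN])
qed

definition sh :: "nat \<Rightarrow> nat \<Rightarrow> nat" where "sh r k = (if k < r then k else Suc k)"
definition un :: "nat \<Rightarrow> nat \<Rightarrow> nat" where "un r j = (if j < r then j else j - 1)"

lemma sh_ne: "sh r k \<noteq> r" by (simp add: sh_def)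
lemma un_sh: "un r (sh r k) = k" by (simp add: sh_def un_def)
lemma sh_un: "i \<noteq> r \<Longrightarrow> sh r (un r i) = i" by (auto simp: sh_def un_def)
lemma sh_lt: "k < m \<Longrightarrow> r < Suc m \<Longrightarrow> sh r k < Suc m" by (simp add: sh_def)
lemma un_lt: "i < Suc m \<Longrightarrow> i \<noteq> r \<Longrightarrow> r < Suc m \<Longrightarrow> un r i < m" by (auto simp: un_def)
lemma sh_inj: "sh r k = sh r k' \<Longrightarrow> k = k'" by (metis un_sh)
lemma un_inj: "i \<noteq> r \<Longrightarrow> i' \<noteq> r \<Longrightarrow> un r i = un r i' \<Longrightarrow> i = i'" by (metis sh_un)
lemma minor_sh: "minor M r c k l = M (sh r k) (sh c l)" by (simp add: minor_def sh_def)

lemma sh_bij: "r < Suc m \<Longrightarrow> bij_betw (sh r) {..<m} ({..<Suc m} - {r})"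
  unfolding bij_betw_def
proof
  show "inj_on (sh r) {..<m}" by (meson inj_onI sh_inj)
  assume r: "r < Suc m"
  show "sh r ` {..<m} = {..<Suc m} - {r}"
  proof
    show "sh r ` {..<m} \<subseteq> {..<Suc m} - {r}" using sh_lt sh_ne r by auto
    show "{..<Suc m} - {r} \<subseteq> sh r ` {..<m}"
    proof
      fix i assume "i \<in> {..<Suc m} - {r}"
      then have "i = sh r (un r i)" "un r i < m" using sh_un un_lt r by auto
      then show "i \<in> sh r ` {..<m}" by blast
    qed
  qed
qed

lemma minor_det:
  fixes M :: "('g::linordered_ab_group_add) smat"
  assumes r: "r < Suc m" and c: "c < Suc m"
  shows "tdet m (minor M r c) = (\<Sum>\<sigma>\<in>{\<sigma>\<in>Perms (Suc m). \<sigma> r = c}. \<Prod>i\<in>{..<Suc m} - {r}. M i (\<sigma> i))"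
proof -
  let ?n = "Suc m"
  define \<phi> where "\<phi> \<sigma> = (\<lambda>k. if k < m then un c (\<sigma> (sh r k)) else k)" for \<sigma> :: "nat \<Rightarrow> nat"
  define \<psi> where "\<psi> \<rho> = (\<lambda>i. if i = r then c else if i < ?n then sh c (\<rho> (un r i)) else i)" for \<rho> :: "nat \<Rightarrow> nat"
  have "(\<Sum>\<sigma>\<in>{\<sigma>\<in>Perms ?n. \<sigma> r = c}. \<Prod>i\<in>{..<?n} - {r}. M i (\<sigma> i)) = (\<Sum>\<rho>\<in>Perms m. \<Prod>k<m. minor M r c k (\<rho> k))"
  proof (rule sum.reindex_bij_witness[where j = \<phi> and i = \<psi>])
    fix \<sigma> assume s: "\<sigma> \<in> {\<sigma>\<in>Perms ?n. \<sigma> r = c}"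
    then have sp: "\<sigma> permutes {..<?n}" and sr: "\<sigma> r = c" by auto
    have sne: "\<And>i. i \<noteq> r \<Longrightarrow> \<sigma> i \<noteq> c" using sr permutes_inj[OF sp] by (metis injD)
    show "\<psi> (\<phi> \<sigma>) = \<sigma>"
    proof
      fix i show "\<psi> (\<phi> \<sigma>) i = \<sigma> i"
      proof (cases "i = r")
        case True then show ?thesis using sr by (simp add: \<psi>_def)
      next
        case False
        show ?thesis
        proof (cases "i < ?n")
          case True
          have "un r i < m" using un_lt[OF True False r] .
          then show ?thesis using False True by (simp add: \<psi>_def \<phi>_def sh_un sne)
        next
          case False2: False
          then show ?thesis using False permutes_not_in[OF sp, of i] by (simp add: \<psi>_def)
        qed
      qed
    qed
    show "\<phi> \<sigma> \<in> Perms m"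
    proof -
      have "\<phi> \<sigma> permutes {..<m}"
      proof (rule inj_imp_permutes)
        show "inj_on (\<phi> \<sigma>) {..<m}"
        proof (rule inj_onI)
          fix k k' assume k: "k \<in> {..<m}" "k' \<in> {..<m}" "\<phi> \<sigma> k = \<phi> \<sigma> k'"
          then have "un c (\<sigma> (sh r k)) = un c (\<sigma> (sh r k'))" by (simp add: \<phi>_def)
          then have "\<sigma> (sh r k) = \<sigma> (sh r k')" using un_inj sne sh_ne by metis
          then have "sh r k = sh r k'" using permutes_inj[OF sp] by (metis injD)
          then show "k = k'" by (rule sh_inj)
        qed
        show "\<And>x. x \<in> {..<m} \<Longrightarrow> \<phi> \<sigma> x \<in> {..<m}"
        proof -
          fix k assume k: "k \<in> {..<m}"
          have "sh r k < ?n" using sh_lt k r by simp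
          then have "\<sigma> (sh r k) < ?n" using perm_lt[OF sp] by blast
          then show "\<phi> \<sigma> k \<in> {..<m}" using k un_lt[OF _ sne[OF sh_ne] c] by (simp add: \<phi>_def)
        qed
        show "\<And>i. i \<notin> {..<m} \<Longrightarrow> \<phi> \<sigma> i = i" by (simp add: \<phi>_def)
      qed simp
      then show ?thesis by simp
    qed
    have "(\<Prod>k<m. minor M r c k (\<phi> \<sigma> k)) = (\<Prod>k<m. M (sh r k) (\<sigma> (sh r k)))"
      by (rule prod.cong) (simp_all add: minor_sh \<phi>_def sh_un sne sh_ne)
    also have "\<dots> = (\<Prod>i\<in>{..<?n} - {r}. M i (\<sigma> i))"
      using prod.reindex_bij_betw[OF sh_bij[OF r], of "\<lambda>i. M i (\<sigma> i)"] .
    finally show "(\<Prod>k<m. minor M r c k (\<phi> \<sigma> k)) = (\<Prod>i\<in>{..<?n} - {r}. M i (\<sigma> i))" .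
  next
    fix \<rho> assume rh: "\<rho> \<in> Perms m"
    then have rp: "\<rho> permutes {..<m}" by simp
    show "\<phi> (\<psi> \<rho>) = \<rho>"
    proof
      fix k show "\<phi> (\<psi> \<rho>) k = \<rho> k"
      proof (cases "k < m")
        case True
        have "sh r k < ?n" using sh_lt True r by simp
        then show ?thesis using True by (simp add: \<phi>_def \<psi>_def sh_ne un_sh)
      next
        case False then show ?thesis using permutes_not_in[OF rp, of k] by (simp add: \<phi>_def)
      qed
    qed
    have pr: "\<psi> \<rho> permutes {..<?n}"
    proof (rule inj_imp_permutes)
      have v: "\<And>i. i < ?n \<Longrightarrow> i \<noteq> r \<Longrightarrow> \<psi> \<rho> i = sh c (\<rho> (un r i))" by (simp add: \<psi>_def)
      show "inj_on (\<psi> \<rho>) {..<?n}"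
      proof (rule inj_onI)
        fix i i' assume ii: "i \<in> {..<?n}" "i' \<in> {..<?n}" "\<psi> \<rho> i = \<psi> \<rho> i'"
        show "i = i'"
        proof (cases "i = r"; cases "i' = r")
          assume "i = r" "i' = r" then show ?thesis by simp
        next
          assume a: "i = r" "i' \<noteq> r"
          then have "c = sh c (\<rho> (un r i'))" using ii v by (simp add: \<psi>_def)
          then show ?thesis using sh_ne by metis
        next
          assume a: "i \<noteq> r" "i' = r"
          then have "sh c (\<rho> (un r i)) = c" using ii v by (simp add: \<psi>_def)
          then show ?thesis using sh_ne by metis
        next
          assume a: "i \<noteq> r" "i' \<noteq> r"
          then have "sh c (\<rho> (un r i)) = sh c (\<rho> (un r i'))" using ii v by simp
          then have "\<rho> (un r i) = \<rho> (un r i')" by (rule sh_inj)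
          then have "un r i = un r i'" using permutes_inj[OF rp] by (metis injD)
          then show ?thesis using un_inj a by blast
        qed
      qed
      show "\<And>x. x \<in> {..<?n} \<Longrightarrow> \<psi> \<rho> x \<in> {..<?n}"
      proof -
        fix i assume i: "i \<in> {..<?n}"
        show "\<psi> \<rho> i \<in> {..<?n}"
        proof (cases "i = r")
          case True then show ?thesis using c by (simp add: \<psi>_def)
        next
          case False
          have "un r i < m" using un_lt i False r by simp
          then have "\<rho> (un r i) < m" using perm_lt[OF rp] by blast
          then show ?thesis using sh_lt[OF _ c] v i False by simp
        qed
      qed
      show "\<And>i. i \<notin> {..<?n} \<Longrightarrow> \<psi> \<rho> i = i" using r by (auto simp: \<psi>_def)
    qed simp
    then show "\<psi> \<rho> \<in> {\<sigma>\<in>Perms ?n. \<sigma> r = c}" by (simp add: \<psi>_def)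
  qed
  then show ?thesis unfolding tdet_def by simp
qed

lemma laplace:
  fixes M :: "('g::linordered_ab_group_add) smat"
  assumes r: "r < Suc m"
  shows "(\<Sum>c<Suc m. M r c * tdet m (minor M r c)) = tdet (Suc m) M"
proof -
  let ?n = "Suc m"
  let ?S = "\<lambda>c. {\<sigma>\<in>Perms ?n. \<sigma> r = c}"
  have "(\<Sum>c<?n. M r c * tdet m (minor M r c)) = (\<Sum>c<?n. \<Sum>\<sigma>\<in>?S c. M r c * (\<Prod>i\<in>{..<?n} - {r}. M i (\<sigma> i)))"
    by (rule sum.cong) (simp_all add: minor_det[OF r] sum_distrib_left)
  also have "\<dots> = (\<Sum>c<?n. \<Sum>\<sigma>\<in>?S c. \<Prod>i<?n. M i (\<sigma> i))"
  proof (rule sum.cong[OF refl], rule sum.cong[OF refl])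
    fix c \<sigma> assume "\<sigma> \<in> ?S c"
    then show "M r c * (\<Prod>i\<in>{..<?n} - {r}. M i (\<sigma> i)) = (\<Prod>i<?n. M i (\<sigma> i))"
      using prod.remove[of "{..<?n}" r "\<lambda>i. M i (\<sigma> i)"] r by simp
  qed
  also have "\<dots> = (\<Sum>\<sigma>\<in>(\<Union>c<?n. ?S c). \<Prod>i<?n. M i (\<sigma> i))"
    by (rule sum.UNION_disjoint[symmetric]) (auto simp: finite_permutations)
  also have "(\<Union>c<?n. ?S c) = Perms ?n"
    using perm_lt r by auto
  finally show ?thesis unfolding tdet_def .
qed

lemma prod_nonNInf:
  fixes f :: "'a \<Rightarrow> 'g::linordered_ab_group_add st"
  shows "finite I \<Longrightarrow> (\<And>i. i \<in> I \<Longrightarrow> f i \<noteq> NInf) \<Longrightarrow> prod f I \<noteq> NInf \<and> nuval (prod f I) = (\<Sum>i\<in>I. nuval (f i))"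
proof (induction I rule: finite_induct)
  case empty then show ?case by (simp add: st_one)
next
  case (insert x F)
  then have a: "prod f F \<noteq> NInf" "nuval (prod f F) = (\<Sum>i\<in>F. nuval (f i))" "f x \<noteq> NInf" by auto
  then show ?case using insert(1,2) by (cases "f x"; cases "prod f F") auto
qed

lemma prod_NInf:
  fixes f :: "'a \<Rightarrow> 'g::linordered_ab_group_add st"
  shows "finite I \<Longrightarrow> i \<in> I \<Longrightarrow> f i = NInf \<Longrightarrow> prod f I = NInf"
  by (simp add: prod.remove st_zero[symmetric])

lemma sum_reindex_perm:
  assumes "p permutes {..<n::nat}"
  shows "(\<Sum>j<n. f (p j)) = (\<Sum>i<n. (f i :: 'a::comm_monoid_add))"
  using sum.reindex_bij_betw[OF permutes_imp_bij[OF assms], of f] .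

lemma adj_det_bound:
  fixes A :: "('g::linordered_ab_group_add) smat"
  assumes d: "tdet (Suc m) A = Tng \<delta>"
  shows "tdet (Suc m) (adj (Suc m) A) = Tng ((\<Sum>j<Suc m. \<delta>) - \<delta>)
       \<or> tdet (Suc m) (adj (Suc m) A) = Gh ((\<Sum>j<Suc m. \<delta>) - \<delta>)"
proof -
  let ?n = "Suc m"
  let ?P = "\<lambda>\<sigma>. \<Prod>i<?n. A i (\<sigma> i)"
  have finP: "finite (Perms ?n)" by (simp add: finite_permutations)
  have dne: "tdet ?n A \<noteq> NInf" using d by simp
  obtain \<pi> where pi: "\<pi> \<in> Perms ?n" "?P \<pi> \<noteq> NInf" "nuval (?P \<pi>) = \<delta>"
    using sum_max_summand[OF finP dne[unfolded tdet_def]] d unfolding tdet_def by auto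
  have pip: "\<pi> permutes {..<?n}" using pi(1) by simp
  have allub: "\<And>\<sigma>. \<sigma> \<in> Perms ?n \<Longrightarrow> nub (?P \<sigma>) \<delta>"
    using sum_summand_nub[OF finP _ dne[unfolded tdet_def]] d unfolding tdet_def by fastforce
  have piNI: "\<And>i. i < ?n \<Longrightarrow> A i (\<pi> i) \<noteq> NInf"
    using pi(2) prod_NInf[of "{..<?n}" _ "\<lambda>i. A i (\<pi> i)"] by auto
  have sumpi: "(\<Sum>i<?n. nuval (A i (\<pi> i))) = \<delta>"
    using prod_nonNInf[of "{..<?n}" "\<lambda>i. A i (\<pi> i)"] piNI pi(3) by simp
  \<comment> \<open>finite substitute for -infinity\<close>
  define E where "E = {nuval (A i j) | i j. i < ?n \<and> j < ?n \<and> A i j \<noteq> NInf} \<union> {\<delta>}"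
  have finE: "finite E"
  proof -
    have "{nuval (A i j) | i j. i < ?n \<and> j < ?n \<and> A i j \<noteq> NInf} \<subseteq> (\<lambda>(i,j). nuval (A i j)) ` ({..<?n} \<times> {..<?n})"
      by auto
    then show ?thesis unfolding E_def by (meson finite_SigmaI finite_Un finite_imageI finite_insert finite_lessThan finite_subset infinite_imp_nonempty)
  qed
  define Mx where "Mx = Max E"
  have Mx: "\<And>i j. i < ?n \<Longrightarrow> j < ?n \<Longrightarrow> A i j \<noteq> NInf \<Longrightarrow> nuval (A i j) \<le> Mx"
    unfolding Mx_def using finE by (intro Max_ge) (auto simp: E_def)
  define K where "K = (\<Sum>i<?n. Mx)"
  define L where "L = min Mx (\<delta> - K + Mx)"
  define w where "w i j = (if A i j = NInf then L else nuval (A i j))" for i j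
  have wMx: "\<And>i j. i < ?n \<Longrightarrow> j < ?n \<Longrightarrow> w i j \<le> Mx" using Mx by (auto simp: w_def L_def)
  have wpi: "(\<Sum>i<?n. w i (\<pi> i)) = \<delta>" using sumpi piNI by (simp add: w_def)
  have opt: "\<And>\<sigma>. \<sigma> permutes {..<?n} \<Longrightarrow> (\<Sum>i<?n. w i (\<sigma> i)) \<le> (\<Sum>i<?n. w i (\<pi> i))"
  proof -
    fix \<sigma> assume sp: "\<sigma> permutes {..<?n}"
    show "(\<Sum>i<?n. w i (\<sigma> i)) \<le> (\<Sum>i<?n. w i (\<pi> i))"
    proof (cases "\<forall>i<?n. A i (\<sigma> i) \<noteq> NInf")
      case True
      then have "(\<Sum>i<?n. w i (\<sigma> i)) = nuval (?P \<sigma>)" "?P \<sigma> \<noteq> NInf"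
        using prod_nonNInf[of "{..<?n}" "\<lambda>i. A i (\<sigma> i)"] by (auto simp: w_def)
      then show ?thesis using allub[of \<sigma>] sp wpi by (simp add: nub_def)
    next
      case False
      then obtain i0 where i0: "i0 < ?n" "A i0 (\<sigma> i0) = NInf" by auto
      have "(\<Sum>i<?n. w i (\<sigma> i)) = w i0 (\<sigma> i0) + (\<Sum>i\<in>{..<?n} - {i0}. w i (\<sigma> i))"
        using sum.remove[of "{..<?n}" i0] i0 by simp
      also have "\<dots> \<le> L + (\<Sum>i\<in>{..<?n} - {i0}. Mx)"
        using i0 wMx perm_lt[OF sp] by (intro add_mono sum_mono) (auto simp: w_def)
      also have "(\<Sum>i\<in>{..<?n} - {i0}. Mx) = K - Mx"
        using sum.remove[of "{..<?n}" i0 "\<lambda>_. Mx"] i0 unfolding K_def by simp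
      also have "L + (K - Mx) \<le> \<delta>" unfolding L_def by (simp add: min_def algebra_simps)
      finally show ?thesis using wpi by simp
    qed
  qed
  interpret potsetup w \<pi> ?n using pip opt by unfold_locales auto
  obtain u v where uv: "\<And>i j. i < ?n \<Longrightarrow> j < ?n \<Longrightarrow> w i j \<le> u i + v j"
    "\<And>i. i < ?n \<Longrightarrow> w i (\<pi> i) = u i + v (\<pi> i)" using potentials by blast
  have Aub: "\<And>i j. i < ?n \<Longrightarrow> j < ?n \<Longrightarrow> nub (A i j) (u i + v j)"
  proof -
    fix i j assume ij: "i < ?n" "j < ?n"
    have "w i j \<le> u i + v j" using uv(1)[OF ij] .
    then show "nub (A i j) (u i + v j)" by (auto simp: nub_def w_def split: if_splits)
  qed
  have duv: "\<delta> = (\<Sum>i<?n. u i) + (\<Sum>i<?n. v i)"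
  proof -
    have "\<delta> = (\<Sum>i<?n. u i + v (\<pi> i))" using wpi uv(2) by simp
    also have "\<dots> = (\<Sum>i<?n. u i) + (\<Sum>i<?n. v (\<pi> i))" by (simp add: sum.distrib)
    finally show ?thesis using sum_reindex_perm[OF pip, of v] by simp
  qed
  have minub: "\<And>r c. r < ?n \<Longrightarrow> c < ?n \<Longrightarrow> nub (tdet m (minor A r c)) (\<delta> - u r - v c)"
  proof -
    fix r c assume rc: "r < ?n" "c < ?n"
    show "nub (tdet m (minor A r c)) (\<delta> - u r - v c)"
      unfolding minor_det[OF rc]
    proof (rule nub_sum)
      fix \<sigma> assume s: "\<sigma> \<in> {\<sigma>\<in>Perms ?n. \<sigma> r = c}"
      then have sp: "\<sigma> permutes {..<?n}" and sr: "\<sigma> r = c" by auto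
      have "nub (\<Prod>i\<in>{..<?n} - {r}. A i (\<sigma> i)) (\<Sum>i\<in>{..<?n} - {r}. u i + v (\<sigma> i))"
        using Aub perm_lt[OF sp] by (intro nub_prod) auto
      moreover have "(\<Sum>i\<in>{..<?n} - {r}. u i + v (\<sigma> i)) = \<delta> - u r - v c"
      proof -
        have "(\<Sum>i\<in>{..<?n} - {r}. u i + v (\<sigma> i)) = (\<Sum>i<?n. u i + v (\<sigma> i)) - (u r + v c)"
          using sum.remove[of "{..<?n}" r "\<lambda>i. u i + v (\<sigma> i)"] rc sr by simp
        also have "(\<Sum>i<?n. u i + v (\<sigma> i)) = \<delta>"
          using duv sum_reindex_perm[OF sp, of v] by (simp add: sum.distrib)
        finally show ?thesis by (simp add: algebra_simps)
      qed
      ultimately show "nub (\<Prod>i\<in>{..<?n} - {r}. A i (\<sigma> i)) (\<delta> - u r - v c)" by simp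
    qed
  qed
  have adjeq: "tdet ?n (adj ?n A) = (\<Sum>\<sigma>\<in>Perms ?n. \<Prod>j<?n. tdet m (minor A (\<sigma> j) j))"
    unfolding tdet_def adj_def by simp
  have ub: "nub (tdet ?n (adj ?n A)) ((\<Sum>j<?n. \<delta>) - \<delta>)"
    unfolding adjeq
  proof (rule nub_sum)
    fix \<sigma> assume s: "\<sigma> \<in> Perms ?n"
    then have sp: "\<sigma> permutes {..<?n}" by simp
    have "nub (\<Prod>j<?n. tdet m (minor A (\<sigma> j) j)) (\<Sum>j<?n. \<delta> - u (\<sigma> j) - v j)"
      using minub perm_lt[OF sp] by (intro nub_prod) auto
    moreover have "(\<Sum>j<?n. \<delta> - u (\<sigma> j) - v j) = (\<Sum>j<?n. \<delta>) - \<delta>"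
    proof -
      have "(\<Sum>j<?n. \<delta> - u (\<sigma> j) - v j) = (\<Sum>j<?n. \<delta>) - (\<Sum>j<?n. u (\<sigma> j)) - (\<Sum>j<?n. v j)"
        by (simp add: sum_subtractf)
      also have "\<dots> = (\<Sum>j<?n. \<delta>) - \<delta>" using duv sum_reindex_perm[OF sp, of u] by simp
      finally show ?thesis .
    qed
    ultimately show "nub (\<Prod>j<?n. tdet m (minor A (\<sigma> j) j)) ((\<Sum>j<?n. \<delta>) - \<delta>)" by simp
  qed
  have minlb: "\<And>r. r < ?n \<Longrightarrow> nlb (tdet m (minor A r (\<pi> r))) (\<delta> - nuval (A r (\<pi> r)))"
  proof -
    fix r assume r: "r < ?n"
    have pr: "\<pi> r < ?n" using perm_lt[OF pip r] .
    have fin: "finite {\<sigma>\<in>Perms ?n. \<sigma> r = \<pi> r}" using finP by simp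
    have "nlb (\<Prod>i\<in>{..<?n} - {r}. A i (\<pi> i)) (\<Sum>i\<in>{..<?n} - {r}. nuval (A i (\<pi> i)))"
      using piNI by (intro nlb_prod) (auto simp: nlb_def)
    moreover have "(\<Sum>i\<in>{..<?n} - {r}. nuval (A i (\<pi> i))) = \<delta> - nuval (A r (\<pi> r))"
      using sum.remove[of "{..<?n}" r "\<lambda>i. nuval (A i (\<pi> i))"] r sumpi by (simp add: algebra_simps)
    ultimately show "nlb (tdet m (minor A r (\<pi> r))) (\<delta> - nuval (A r (\<pi> r)))"
      unfolding minor_det[OF r pr] using nlb_sum[OF fin, of \<pi>] pi(1) by simp
  qed
  have ipp: "inv \<pi> permutes {..<?n}" using permutes_inv[OF pip] .
  have lb: "nlb (tdet ?n (adj ?n A)) ((\<Sum>j<?n. \<delta>) - \<delta>)"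
    unfolding adjeq
  proof (rule nlb_sum[OF finP])
    show "inv \<pi> \<in> Perms ?n" using ipp by simp
    have "nlb (\<Prod>j<?n. tdet m (minor A (inv \<pi> j) j)) (\<Sum>j<?n. \<delta> - nuval (A (inv \<pi> j) (\<pi> (inv \<pi> j))))"
    proof (rule nlb_prod)
      fix j assume j: "j \<in> {..<?n}"
      have "inv \<pi> j < ?n" using perm_lt[OF ipp] j by simp
      from minlb[OF this] show "nlb (tdet m (minor A (inv \<pi> j) j)) (\<delta> - nuval (A (inv \<pi> j) (\<pi> (inv \<pi> j))))"
        by (simp add: permutes_inverses[OF pip])
    qed
    moreover have "(\<Sum>j<?n. \<delta> - nuval (A (inv \<pi> j) (\<pi> (inv \<pi> j)))) = (\<Sum>j<?n. \<delta>) - \<delta>"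
      using sum_reindex_perm[OF ipp, of "\<lambda>i. nuval (A i (\<pi> i))"] sumpi by (simp add: sum_subtractf)
    ultimately show "nlb (\<Prod>j<?n. tdet m (minor A (inv \<pi> j) j)) ((\<Sum>j<?n. \<delta>) - \<delta>)" by simp
  qed
  from ub lb show ?thesis
    by (cases "tdet ?n (adj ?n A)") (auto simp: nub_def nlb_def)
qed

lemma Tng_pow: "(Tng a :: 'g::linordered_ab_group_add st) ^ k = Tng (\<Sum>j<k. a)"
  by (induction k) (simp_all add: st_one add.commute)

lemma qinv_det:
  fixes A :: "('g::linordered_ab_group_add) smat"
  assumes d: "tdet (Suc m) A = Tng \<delta>"
  shows "gs (tdet (Suc m) (qinv (Suc m) A) * tdet (Suc m) A) 1"
proof -
  let ?n = "Suc m"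
  let ?t = "(\<Sum>j<?n. \<delta>) - \<delta>"
  have "tdet ?n (qinv ?n A) = Tng (- \<delta>) ^ ?n * tdet ?n (adj ?n A)"
    unfolding qinv_def d using tdet_scalar[of ?n "Tng (- \<delta>)" "adj ?n A"] by simp
  also have "Tng (- \<delta>) ^ ?n = Tng (- (\<Sum>j<?n. \<delta>))" by (simp add: Tng_pow sum_negf)
  finally have e: "tdet ?n (qinv ?n A) = Tng (- (\<Sum>j<?n. \<delta>)) * tdet ?n (adj ?n A)" .
  from adj_det_bound[OF d] show ?thesis
  proof
    assume a: "tdet ?n (adj ?n A) = Tng ?t"
    show ?thesis unfolding e a d by (simp add: st_one gs_def)
  next
    assume a: "tdet ?n (adj ?n A) = Gh ?t"
    show ?thesis unfolding e a d by (simp add: st_one gs_def)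
  qed
qed

lemma tdet_zero_eq: "tdet 0 X = tdet 0 Y"
  unfolding tdet_def by simp

theorem mainTheorem6:
  fixes n :: nat and A B B' :: "('g::linordered_ab_group_add) smat"
  assumes "tangible (tdet n A)"
    and "\<forall>i<n. \<forall>j<n. B' i j = mmul n (mmul n (qinv n A) B) A i j"
  shows "(gs (tdet n B') (tdet n B) \<and> (tangible (tdet n B') \<longrightarrow> tdet n B' = tdet n B))
         \<and> gs (ttrace n B') (ttrace n B)"
proof (cases n)
  case 0
  then show ?thesis by (simp add: tdet_zero_eq[of B' B] gs_refl ttrace_def)
next
  case (Suc m)
  obtain \<delta> where d: "tdet n A = Tng \<delta>" using assms(1) by (cases "tdet n A") auto
  let ?Q = "qinv n A"
  have B'eq: "tdet n B' = tdet n (mmul n (mmul n ?Q B) A)"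
    by (rule tdet_cong) (simp add: assms(2))
  have g1: "gs (tdet n B') (tdet n (mmul n ?Q B) * tdet n A)"
    unfolding B'eq by (rule tdet_mult)
  have g2: "gs (tdet n (mmul n ?Q B) * tdet n A) (tdet n ?Q * tdet n B * tdet n A)"
    by (rule gs_mult[OF tdet_mult gs_refl])
  have g3: "gs ((tdet n ?Q * tdet n A) * tdet n B) (1 * tdet n B)"
    by (rule gs_mult[OF _ gs_refl]) (use qinv_det[of m A \<delta>] d Suc in simp)
  have "tdet n ?Q * tdet n B * tdet n A = (tdet n ?Q * tdet n A) * tdet n B" by (simp add: mult_ac)
  then have gdet: "gs (tdet n B') (tdet n B)"
    using gs_trans[OF gs_trans[OF g1 g2]] g3 by simp
  define Qm where "Qm k l = (\<Sum>i<n. A k i * ?Q i l)" for k l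
  have Qm_eq: "\<And>k l. Qm k l = Tng (- \<delta>) * (\<Sum>i<n. A k i * tdet m (minor A l i))"
  proof -
    fix k l
    have "Qm k l = (\<Sum>i<n. Tng (- \<delta>) * (A k i * tdet m (minor A l i)))"
      unfolding Qm_def qinv_def adj_def d using Suc by (intro sum.cong) (simp_all add: mult_ac)
    then show "Qm k l = Tng (- \<delta>) * (\<Sum>i<n. A k i * tdet m (minor A l i))"
      by (simp add: sum_distrib_left)
  qed
  have Qdiag: "\<And>l. l < n \<Longrightarrow> Qm l l = 1"
  proof -
    fix l assume l: "l < n"
    have "(\<Sum>i<n. A l i * tdet m (minor A l i)) = tdet n A" using laplace[of l m A] l Suc by simp
    then show "Qm l l = 1" unfolding Qm_eq d by (simp add: st_one)
  qed
  have Qoff: "\<And>k l. k < n \<Longrightarrow> l < n \<Longrightarrow> k \<noteq> l \<Longrightarrow> gz (Qm k l)"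
  proof -
    fix k l assume kl: "k < n" "l < n" "k \<noteq> l"
    define M where "M i j = (if i = l then A k j else A i j)" for i j
    have mm: "\<And>i. minor M l i = minor A l i" unfolding M_def minor_def by (auto intro!: ext)
    have "(\<Sum>i<n. A k i * tdet m (minor A l i)) = (\<Sum>i<Suc m. M l i * tdet m (minor M l i))"
      using Suc by (simp add: mm M_def)
    also have "\<dots> = tdet (Suc m) M" using laplace[of l m M] kl Suc by simp
    finally have e: "(\<Sum>i<n. A k i * tdet m (minor A l i)) = tdet n M" using Suc by simp
    have "gz (tdet n M)" by (rule tdet_rep_rows[OF kl]) (simp add: M_def kl(3))
    then show "gz (Qm k l)" unfolding Qm_eq e by (metis gz_mult mult.commute)
  qed
  have tr1: "ttrace n B' = (\<Sum>i<n. \<Sum>k<n. \<Sum>l<n. B l k * (A k i * ?Q i l))"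
    unfolding ttrace_def using assms(2) by (simp add: mmul_def sum_distrib_left sum_distrib_right mult_ac)
  also have "\<dots> = (\<Sum>l<n. \<Sum>k<n. \<Sum>i<n. B l k * (A k i * ?Q i l))"
  proof -
    have "(\<Sum>i<n. \<Sum>k<n. \<Sum>l<n. B l k * (A k i * ?Q i l)) = (\<Sum>i<n. \<Sum>l<n. \<Sum>k<n. B l k * (A k i * ?Q i l))"
      by (rule sum.cong[OF refl], rule sum.swap)
    also have "\<dots> = (\<Sum>l<n. \<Sum>i<n. \<Sum>k<n. B l k * (A k i * ?Q i l))" by (rule sum.swap)
    also have "\<dots> = (\<Sum>l<n. \<Sum>k<n. \<Sum>i<n. B l k * (A k i * ?Q i l))"
      by (rule sum.cong[OF refl], rule sum.swap)
    finally show ?thesis .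
  qed
  also have "\<dots> = (\<Sum>l<n. \<Sum>k<n. B l k * Qm k l)"
    unfolding Qm_def by (simp add: sum_distrib_left)
  also have "\<dots> = (\<Sum>l<n. B l l + (\<Sum>k\<in>{..<n} - {l}. B l k * Qm k l))"
  proof (rule sum.cong[OF refl])
    fix l assume l: "l \<in> {..<n}"
    show "(\<Sum>k<n. B l k * Qm k l) = B l l + (\<Sum>k\<in>{..<n} - {l}. B l k * Qm k l)"
      using sum.remove[of "{..<n}" l "\<lambda>k. B l k * Qm k l"] l Qdiag[of l] by (simp add: st_one[symmetric])
  qed
  also have "\<dots> = ttrace n B + (\<Sum>l<n. \<Sum>k\<in>{..<n} - {l}. B l k * Qm k l)"
    unfolding ttrace_def by (simp add: sum.distrib)
  finally have tre: "ttrace n B' = ttrace n B + (\<Sum>l<n. \<Sum>k\<in>{..<n} - {l}. B l k * Qm k l)" .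
  have "gz (\<Sum>l<n. \<Sum>k\<in>{..<n} - {l}. B l k * Qm k l)"
    using Qoff by (intro gz_sum) (metis DiffE gz_mult insertI1 lessThan_iff mult.commute)
  then have gtr: "gs (ttrace n B') (ttrace n B)" unfolding tre by (rule gs_add_gz)
  show ?thesis using gdet gtr gs_tangible by blast
qed

end
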